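(* Let $M$ be a left $H$-module with action $\triangleright$, and let $T\in\mathrm{End}_k(M)$ be a projection ($T^2=T$). For $h\in H$ put $$T_h=h_{(1)}\triangleright T(S(h_{(2)})\triangleright -),\qquad \tilde T_h=S(h_{(1)})\triangleright T(h_{(2)}\triangleright -).$$ The following are equivalent: (i) $T_h\circ T=T\circ T_h$ for all $h\in H$; (ii) $\tilde T_h\circ T=T\circ\tilde T_h$ for all $h\in H$; (iii) $T_h\circ\tilde T_k=\tilde T_k\circ T_h$ for all $h,k\in H$.
   Context: Throughout, $k$ is a field and $H$ is a Hopf algebra over $k$ with bijective antipode $S$ and Sweedler notation $\Delta(h)=h_{(1)}\otimes h_{(2)}$. Condition (i) is called the c-condition and condition (ii) the $\tilde c$-condition. *)

theory Defs
  imports Complex_Main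
begin

text \<open>The coproduct is
given in Sweedler form: \<open>\<Delta> h\<close> is a finite list of pairs \<open>(h1, h2)\<close> representing the tensor
\<open>\<Sum> h1 \<otimes> h2\<close> in \<open>H \<otimes> H\<close>.  Since this representation is not unique, all coalgebra axioms
are stated through (multi)linear forms into \<open>k\<close>, which separate the points of tensor
products of vector spaces.\<close>

definition bilin_form :: "('k::field \<Rightarrow> 'h::ab_group_add \<Rightarrow> 'h) \<Rightarrow> ('h \<Rightarrow> 'h \<Rightarrow> 'k) \<Rightarrow> bool" where
  "bilin_form sH f \<longleftrightarrow> (\<forall>x. Vector_Spaces.linear sH (*) (f x)) \<and> (\<forall>y. Vector_Spaces.linear sH (*) (\<lambda>x. f x y))"

definition trilin_form :: "('k::field \<Rightarrow> 'h::ab_group_add \<Rightarrow> 'h) \<Rightarrow> ('h \<Rightarrow> 'h \<Rightarrow> 'h \<Rightarrow> 'k) \<Rightarrow> bool" where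
  "trilin_form sH t \<longleftrightarrow> (\<forall>x y. Vector_Spaces.linear sH (*) (t x y)) \<and>
     (\<forall>x z. Vector_Spaces.linear sH (*) (\<lambda>y. t x y z)) \<and> (\<forall>y z. Vector_Spaces.linear sH (*) (\<lambda>x. t x y z))"

definition swsum :: "('h \<Rightarrow> 'h \<Rightarrow> 'v::monoid_add) \<Rightarrow> ('h \<times> 'h) list \<Rightarrow> 'v" where
  "swsum f xs = sum_list (map (\<lambda>(a, b). f a b) xs)"

definition k_algebra :: "('k::field \<Rightarrow> 'h::ring_1 \<Rightarrow> 'h) \<Rightarrow> bool" where
  "k_algebra sH \<longleftrightarrow> vector_space sH \<and>
     (\<forall>c x y. sH c (x * y) = sH c x * y \<and> sH c (x * y) = x * sH c y)"

definition hopf_algebra ::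
  "('k::field \<Rightarrow> 'h::ring_1 \<Rightarrow> 'h) \<Rightarrow> ('h \<Rightarrow> ('h \<times> 'h) list) \<Rightarrow> ('h \<Rightarrow> 'k) \<Rightarrow> ('h \<Rightarrow> 'h) \<Rightarrow> bool" where
  "hopf_algebra sH \<Delta> \<epsilon> S \<longleftrightarrow>
     k_algebra sH \<and>
     \<comment> \<open>\<Delta> is a k-linear map H \<rightarrow> H \<otimes> H\<close>
     (\<forall>f. bilin_form sH f \<longrightarrow> Vector_Spaces.linear sH (*) (\<lambda>h. swsum f (\<Delta> h))) \<and>
     \<comment> \<open>coassociativity\<close>
     (\<forall>t h. trilin_form sH t \<longrightarrow>
        swsum (\<lambda>a b. swsum (\<lambda>c d. t c d b) (\<Delta> a)) (\<Delta> h) =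
        swsum (\<lambda>a b. swsum (\<lambda>c d. t a c d) (\<Delta> b)) (\<Delta> h)) \<and>
     \<comment> \<open>counit\<close>
     Vector_Spaces.linear sH (*) \<epsilon> \<and>
     (\<forall>h. swsum (\<lambda>a b. sH (\<epsilon> a) b) (\<Delta> h) = h) \<and>
     (\<forall>h. swsum (\<lambda>a b. sH (\<epsilon> b) a) (\<Delta> h) = h) \<and>
     \<comment> \<open>\<Delta> and \<epsilon> are algebra maps\<close>
     (\<forall>f x y. bilin_form sH f \<longrightarrow>
        swsum f (\<Delta> (x * y)) = swsum (\<lambda>a b. swsum (\<lambda>c d. f (a * c) (b * d)) (\<Delta> y)) (\<Delta> x)) \<and>
     (\<forall>f. bilin_form sH f \<longrightarrow> swsum f (\<Delta> 1) = f 1 1) \<and>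
     (\<forall>x y. \<epsilon> (x * y) = \<epsilon> x * \<epsilon> y) \<and> \<epsilon> 1 = 1 \<and>
     \<comment> \<open>antipode\<close>
     Vector_Spaces.linear sH sH S \<and>
     (\<forall>h. swsum (\<lambda>a b. S a * b) (\<Delta> h) = sH (\<epsilon> h) 1) \<and>
     (\<forall>h. swsum (\<lambda>a b. a * S b) (\<Delta> h) = sH (\<epsilon> h) 1)"

definition left_hmodule ::
  "('k::field \<Rightarrow> 'h::ring_1 \<Rightarrow> 'h) \<Rightarrow> ('k \<Rightarrow> 'm::ab_group_add \<Rightarrow> 'm) \<Rightarrow> ('h \<Rightarrow> 'm \<Rightarrow> 'm) \<Rightarrow> bool" where
  "left_hmodule sH sM act \<longleftrightarrow> vector_space sM \<and>
     (\<forall>h. Vector_Spaces.linear sM sM (act h)) \<and>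
     (\<forall>m. Vector_Spaces.linear sH sM (\<lambda>h. act h m)) \<and>
     (\<forall>x y m. act (x * y) m = act x (act y m)) \<and> (\<forall>m. act 1 m = m)"

definition T_op :: "('h \<Rightarrow> ('h \<times> 'h) list) \<Rightarrow> ('h \<Rightarrow> 'h) \<Rightarrow> ('h \<Rightarrow> 'm::monoid_add \<Rightarrow> 'm) \<Rightarrow> ('m \<Rightarrow> 'm) \<Rightarrow> 'h \<Rightarrow> 'm \<Rightarrow> 'm" where
  "T_op \<Delta> S act T h m = swsum (\<lambda>a b. act a (T (act (S b) m))) (\<Delta> h)"

definition Tt_op :: "('h \<Rightarrow> ('h \<times> 'h) list) \<Rightarrow> ('h \<Rightarrow> 'h) \<Rightarrow> ('h \<Rightarrow> 'm::monoid_add \<Rightarrow> 'm) \<Rightarrow> ('m \<Rightarrow> 'm) \<Rightarrow> 'h \<Rightarrow> 'm \<Rightarrow> 'm" where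
  "Tt_op \<Delta> S act T h m = swsum (\<lambda>a b. act (S a) (T (act b m))) (\<Delta> h)"

end

theory Submission
  imports Defs
begin

definition lin :: "('k::field \<Rightarrow> 'a::ab_group_add \<Rightarrow> 'a) \<Rightarrow> ('k \<Rightarrow> 'b::ab_group_add \<Rightarrow> 'b) \<Rightarrow> ('a \<Rightarrow> 'b) \<Rightarrow> bool" where
  "lin s1 s2 f \<longleftrightarrow> (\<forall>x y. f (x + y) = f x + f y) \<and> (\<forall>c x. f (s1 c x) = s2 c (f x))"

lemma linear_lin: "Vector_Spaces.linear s1 s2 f \<longleftrightarrow> vector_space s1 \<and> vector_space s2 \<and> lin s1 s2 f"
  unfolding Vector_Spaces.linear_iff lin_def by auto

lemma vs_zero: "vector_space s \<Longrightarrow> s a 0 = 0"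
  by (simp add: module.scale_zero_right module_iff_vector_space)
lemma vs_distrib: "vector_space s \<Longrightarrow> s a (x + y) = s a x + s a y"
  by (simp add: vector_space.vector_space_assms(1))
lemma vs_assoc: "vector_space s \<Longrightarrow> s a (s b x) = s (a * b) x"
  by (simp add: vector_space.vector_space_assms(3))
lemma vs_comm: "vector_space s \<Longrightarrow> s a (s b x) = s b (s a x)"
  by (simp add: vs_assoc mult.commute)

lemma lin_add: "lin s1 s2 f \<Longrightarrow> f (x + y) = f x + f y" by (simp add: lin_def)
lemma lin_scale: "lin s1 s2 f \<Longrightarrow> f (s1 c x) = s2 c (f x)" by (simp add: lin_def)
lemma lin_zero: "lin s1 s2 f \<Longrightarrow> f 0 = 0"
proof -
  assume "lin s1 s2 f"
  then have "f (0 + 0) = f 0 + f 0" by (rule lin_add)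
  then show ?thesis by simp
qed

lemma swsum_Nil[simp]: "swsum f [] = 0" by (simp add: swsum_def)
lemma swsum_Cons[simp]: "swsum f ((a,b) # xs) = f a b + swsum f xs" by (simp add: swsum_def)

lemma lin_swsum: "lin s1 s2 g \<Longrightarrow> g (swsum f xs) = swsum (\<lambda>a b. g (f a b)) xs"
  by (induction xs) (auto simp: lin_zero lin_add)

lemma swsum_add: "swsum (\<lambda>a b. (f a b :: 'v::comm_monoid_add) + g a b) xs = swsum f xs + swsum g xs"
  by (induction xs) (auto simp: add_ac)

lemma swsum_zero: "swsum (\<lambda>a b. 0) xs = 0"
  by (induction xs) auto

lemma swsum_swap: "swsum (\<lambda>a b. swsum (\<lambda>c d. (F a b c d :: 'v::comm_monoid_add)) ys) xs = swsum (\<lambda>c d. swsum (\<lambda>a b. F a b c d) xs) ys"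
proof (induction xs)
  case Nil then show ?case by (simp add: swsum_zero)
next
  case (Cons p xs) then show ?case by (cases p) (simp add: swsum_add)
qed

lemma swsum_cong2: assumes "\<And>a b. f a b = g a b" shows "swsum f xs = swsum g xs"
proof -
  have "f = g" using assms by (intro ext)
  then show ?thesis by simp
qed

lemma swsum_cong: "(\<And>a b. (a, b) \<in> set xs \<Longrightarrow> f a b = g a b) \<Longrightarrow> swsum f xs = swsum g xs"
  by (induction xs) auto

lemma vs_k: "vector_space ((*) :: 'k::field \<Rightarrow> 'k \<Rightarrow> 'k)"
  by (simp add: vector_space_def algebra_simps)

lemma sep:
  fixes s :: "'k::field \<Rightarrow> 'v::ab_group_add \<Rightarrow> 'v"
  assumes vs: "vector_space s" and h: "\<And>\<phi>. lin s ((*) :: 'k \<Rightarrow> 'k \<Rightarrow> 'k) \<phi> \<Longrightarrow> \<phi> x = \<phi> y"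
  shows "x = y"
proof (rule ccontr)
  assume "x \<noteq> y" then have nz: "x - y \<noteq> 0" by simp
  interpret p: vector_space_pair s "(*) :: 'k \<Rightarrow> 'k \<Rightarrow> 'k"
    using vs vs_k by (simp add: vector_space_pair_def)
  have "p.vs1.independent {x - y}" using nz by simp
  from p.linear_independent_extend[OF this, of "\<lambda>_. 1"] obtain g where
    g: "Vector_Spaces.linear s (*) g" "g (x - y) = 1" by auto
  then have l: "lin s (*) g" by (simp add: linear_lin)
  have "g x = g ((x - y) + y)" by simp
  also have "\<dots> = g (x - y) + g y" by (rule lin_add[OF l])
  finally have "g x = 1 + g y" using g by simp
  moreover have "g x = g y" by (rule h[OF l])
  ultimately show False by simp
qed

lemma lin_id: "lin s s (\<lambda>x. x)" by (simp add: lin_def)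
lemma lin_comp: "lin s2 s3 g \<Longrightarrow> lin s1 s2 f \<Longrightarrow> lin s1 s3 (\<lambda>x. g (f x))"
  by (simp add: lin_def)
lemma lin_sw: "vector_space s2 \<Longrightarrow> (\<And>a b. lin s1 s2 (\<lambda>x. F a b x)) \<Longrightarrow> lin s1 s2 (\<lambda>x. swsum (\<lambda>a b. F a b x) xs)"
proof (induction xs)
  case Nil then show ?case by (simp add: lin_def vs_zero)
next
  case (Cons p xs)
  obtain a b where p: "p = (a, b)" by (cases p)
  have l: "lin s1 s2 (F a b)" using Cons by simp
  have ih: "lin s1 s2 (\<lambda>x. swsum (\<lambda>a b. F a b x) xs)" using Cons by simp
  show ?case unfolding p lin_def
    using lin_add[OF l] lin_scale[OF l] lin_add[OF ih] lin_scale[OF ih]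
    by (simp add: algebra_simps vs_distrib[OF Cons(2)])
qed

locale hctx =
  fixes sH :: "'k::field \<Rightarrow> 'h::ring_1 \<Rightarrow> 'h"
    and \<Delta> :: "'h \<Rightarrow> ('h \<times> 'h) list" and \<epsilon> :: "'h \<Rightarrow> 'k" and S :: "'h \<Rightarrow> 'h"
    and sM :: "'k \<Rightarrow> 'm::ab_group_add \<Rightarrow> 'm" and act :: "'h \<Rightarrow> 'm \<Rightarrow> 'm"
  assumes hopf: "hopf_algebra sH \<Delta> \<epsilon> S" and modl: "left_hmodule sH sM act"
begin

lemma vsH: "vector_space sH" using hopf by (simp add: hopf_algebra_def k_algebra_def)
lemma kalg1: "sH c (x * y) = sH c x * y" using hopf unfolding hopf_algebra_def k_algebra_def by blast
lemma kalg2: "sH c (x * y) = x * sH c y" using hopf unfolding hopf_algebra_def k_algebra_def by blast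
lemma vsM: "vector_space sM" using modl by (simp add: left_hmodule_def)
lemma act_mult: "act (x * y) m = act x (act y m)" using modl by (simp add: left_hmodule_def)
lemma act_one: "act 1 m = m" using modl by (simp add: left_hmodule_def)
lemma linS: "lin sH sH S" using hopf by (simp add: hopf_algebra_def linear_lin)
lemma lin_eps: "lin sH (*) \<epsilon>" using hopf by (simp add: hopf_algebra_def linear_lin)
lemma lin_act1: "lin sH sM (\<lambda>h. act h m)" using modl by (simp add: left_hmodule_def linear_lin)
lemma lin_act2: "lin sM sM (act h)" using modl by (simp add: left_hmodule_def linear_lin)
lemma counit1: "swsum (\<lambda>a b. sH (\<epsilon> a) b) (\<Delta> h) = h" using hopf by (simp add: hopf_algebra_def)
lemma counit2: "swsum (\<lambda>a b. sH (\<epsilon> b) a) (\<Delta> h) = h" using hopf by (simp add: hopf_algebra_def)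
lemma eps_mult: "\<epsilon> (x * y) = \<epsilon> x * \<epsilon> y" using hopf by (simp add: hopf_algebra_def)
lemma eps_one: "\<epsilon> 1 = 1" using hopf by (simp add: hopf_algebra_def)
lemma antip1: "swsum (\<lambda>a b. S a * b) (\<Delta> h) = sH (\<epsilon> h) 1" using hopf by (simp add: hopf_algebra_def)
lemma antip2: "swsum (\<lambda>a b. a * S b) (\<Delta> h) = sH (\<epsilon> h) 1" using hopf by (simp add: hopf_algebra_def)

lemma lin_actL: "lin s1 sH f \<Longrightarrow> lin s1 sM (\<lambda>x. act (f x) m)"
  using lin_comp[OF lin_act1] by blast
lemma lin_actR: "lin s1 sM f \<Longrightarrow> lin s1 sM (\<lambda>x. act h (f x))"
  using lin_comp[OF lin_act2] by blast
lemma lin_S: "lin s1 sH f \<Longrightarrow> lin s1 sH (\<lambda>x. S (f x))"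
  using lin_comp[OF linS] by blast
lemma lin_mL: "lin s1 sH f \<Longrightarrow> lin s1 sH (\<lambda>x. f x * c)"
  by (simp add: lin_def distrib_right kalg1)
lemma lin_mR: "lin s1 sH f \<Longrightarrow> lin s1 sH (\<lambda>x. c * f x)"
  by (simp add: lin_def distrib_left kalg2)
lemma lin_sM: "lin s1 sM f \<Longrightarrow> lin s1 sM (\<lambda>x. sM c (f x))"
  using vsM by (simp add: lin_def vs_distrib vs_comm)
lemma lin_sH: "lin s1 sH f \<Longrightarrow> lin s1 sH (\<lambda>x. sH c (f x))"
  using vsH by (simp add: lin_def vs_distrib vs_comm)

lemma bilin_of:
  assumes "lin sV (*) \<phi>" "\<And>a. lin sH sV (F a)" "\<And>b. lin sH sV (\<lambda>a. F a b)"
  shows "bilin_form sH (\<lambda>a b. \<phi> (F a b))"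
  unfolding bilin_form_def linear_lin using assms vsH vs_k
  by (auto intro: lin_comp[OF assms(1)])

lemma trilin_of:
  assumes "lin sV (*) \<phi>" "\<And>a b. lin sH sV (t a b)" "\<And>a c. lin sH sV (\<lambda>b. t a b c)"
     "\<And>b c. lin sH sV (\<lambda>a. t a b c)"
  shows "trilin_form sH (\<lambda>a b c. \<phi> (t a b c))"
  unfolding trilin_form_def linear_lin using assms vsH vs_k
  by (auto intro: lin_comp[OF assms(1)])

lemma DeltaV:
  assumes vs: "vector_space sV" and F: "\<And>a. lin sH sV (F a)" "\<And>b. lin sH sV (\<lambda>a. F a b)"
  shows "lin sH sV (\<lambda>h. swsum F (\<Delta> h))"
proof -
  have L: "lin sH (*) (\<lambda>h. swsum (\<lambda>a b. \<phi> (F a b)) (\<Delta> h))" if p: "lin sV (*) \<phi>" for \<phi>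
    using hopf bilin_of[OF p F] by (simp add: hopf_algebra_def linear_lin)
  show ?thesis unfolding lin_def
  proof (intro conjI allI)
    fix x y show "swsum F (\<Delta> (x + y)) = swsum F (\<Delta> x) + swsum F (\<Delta> y)"
    proof (rule sep[OF vs])
      fix \<phi> :: "_ \<Rightarrow> 'k" assume p: "lin sV (*) \<phi>"
      show "\<phi> (swsum F (\<Delta> (x + y))) = \<phi> (swsum F (\<Delta> x) + swsum F (\<Delta> y))"
        using lin_add[OF L[OF p]] by (simp add: lin_swsum[OF p] lin_add[OF p])
    qed
  next
    fix c x show "swsum F (\<Delta> (sH c x)) = sV c (swsum F (\<Delta> x))"
    proof (rule sep[OF vs])
      fix \<phi> :: "_ \<Rightarrow> 'k" assume p: "lin sV (*) \<phi>"
      show "\<phi> (swsum F (\<Delta> (sH c x))) = \<phi> (sV c (swsum F (\<Delta> x)))"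
        using lin_scale[OF L[OF p]] by (simp add: lin_swsum[OF p] lin_scale[OF p])
    qed
  qed
qed

lemma coassocV:
  assumes vs: "vector_space sV" and t: "\<And>a b. lin sH sV (t a b)" "\<And>a c. lin sH sV (\<lambda>b. t a b c)"
     "\<And>b c. lin sH sV (\<lambda>a. t a b c)"
  shows "swsum (\<lambda>a b. swsum (\<lambda>c d. t c d b) (\<Delta> a)) (\<Delta> h) =
        swsum (\<lambda>a b. swsum (\<lambda>c d. t a c d) (\<Delta> b)) (\<Delta> h)"
proof (rule sep[OF vs])
  fix \<phi> :: "_ \<Rightarrow> 'k" assume p: "lin sV (*) \<phi>"
  show "\<phi> (swsum (\<lambda>a b. swsum (\<lambda>c d. t c d b) (\<Delta> a)) (\<Delta> h)) =
        \<phi> (swsum (\<lambda>a b. swsum (\<lambda>c d. t a c d) (\<Delta> b)) (\<Delta> h))"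
    using hopf trilin_of[OF p t] by (simp add: hopf_algebra_def lin_swsum[OF p])
qed

lemma multV:
  assumes vs: "vector_space sV" and F: "\<And>a. lin sH sV (F a)" "\<And>b. lin sH sV (\<lambda>a. F a b)"
  shows "swsum F (\<Delta> (x * y)) = swsum (\<lambda>a b. swsum (\<lambda>c d. F (a * c) (b * d)) (\<Delta> y)) (\<Delta> x)"
proof (rule sep[OF vs])
  fix \<phi> :: "_ \<Rightarrow> 'k" assume p: "lin sV (*) \<phi>"
  show "\<phi> (swsum F (\<Delta> (x * y))) = \<phi> (swsum (\<lambda>a b. swsum (\<lambda>c d. F (a * c) (b * d)) (\<Delta> y)) (\<Delta> x))"
    using hopf bilin_of[OF p F] by (simp add: hopf_algebra_def lin_swsum[OF p])
qed

lemma unitV: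
  assumes vs: "vector_space sV" and F: "\<And>a. lin sH sV (F a)" "\<And>b. lin sH sV (\<lambda>a. F a b)"
  shows "swsum F (\<Delta> 1) = F 1 1"
proof (rule sep[OF vs])
  fix \<phi> :: "_ \<Rightarrow> 'k" assume p: "lin sV (*) \<phi>"
  show "\<phi> (swsum F (\<Delta> 1)) = \<phi> (F 1 1)"
    using hopf bilin_of[OF p F] by (simp add: hopf_algebra_def lin_swsum[OF p])
qed

lemma lin_swD:
  assumes vs: "vector_space sV" and F: "\<And>a. lin sH sV (F a)" "\<And>b. lin sH sV (\<lambda>a. F a b)"
  shows "lin sH sV (\<lambda>x. swsum F (\<Delta> x))"
  using DeltaV[OF assms] .

lemmas lin_intros = lin_id lin_actL lin_actR lin_S lin_mL lin_mR lin_sM lin_sH lin_swD lin_sw vsH vsM vs_k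


lemma lin_app: "lin sM sM X \<Longrightarrow> lin s1 sM f \<Longrightarrow> lin s1 sM (\<lambda>x. X (f x))"
  using lin_comp by blast

lemma b_lem:
  assumes X: "lin sM sM X"
  shows "swsum (\<lambda>a b. T_op \<Delta> S act X a (act b m)) (\<Delta> h) = act h (X m)"
proof -
  have L: "lin sH sM (\<lambda>u. act a (X (act u m)))" for a
    by (intro lin_intros lin_app[OF X])
  have "swsum (\<lambda>a b. T_op \<Delta> S act X a (act b m)) (\<Delta> h) =
     swsum (\<lambda>a b. swsum (\<lambda>c d. act c (X (act (S d) (act b m)))) (\<Delta> a)) (\<Delta> h)"
    by (simp add: T_op_def)
  also have "\<dots> = swsum (\<lambda>a b. swsum (\<lambda>c d. act a (X (act (S c) (act d m)))) (\<Delta> b)) (\<Delta> h)"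
    by (rule coassocV[OF vsM]) (intro lin_intros lin_app[OF X])+
  also have "\<dots> = swsum (\<lambda>a b. act a (X (act (swsum (\<lambda>c d. S c * d) (\<Delta> b)) m))) (\<Delta> h)"
    by (simp add: lin_swsum[OF L] act_mult)
  also have "\<dots> = swsum (\<lambda>a b. sM (\<epsilon> b) (act a (X m))) (\<Delta> h)"
    by (simp add: antip1 lin_scale[OF lin_act1] lin_scale[OF lin_act2] lin_scale[OF X] act_one)
  also have "\<dots> = act h (X m)"
    apply (subst (2) counit2[symmetric, of h])
    by (simp add: lin_swsum[OF lin_act1] lin_scale[OF lin_act1])
  finally show ?thesis .
qed


lemma lin_Top_m: assumes Z: "lin sM sM Z" shows "lin s1 sM f \<Longrightarrow> lin s1 sM (\<lambda>x. T_op \<Delta> S act Z d (f x))"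
  unfolding T_op_def by (intro lin_intros lin_app[OF Z])
lemma lin_Top_h: assumes Z: "lin sM sM Z" shows "lin s1 sH f \<Longrightarrow> lin s1 sM (\<lambda>x. T_op \<Delta> S act Z (f x) y)"
  unfolding T_op_def by (rule lin_comp[of sH]) (intro lin_intros lin_app[OF Z])+
lemma lin_Ttop_m: assumes Z: "lin sM sM Z" shows "lin s1 sM f \<Longrightarrow> lin s1 sM (\<lambda>x. Tt_op \<Delta> S act Z d (f x))"
  unfolding Tt_op_def by (intro lin_intros lin_app[OF Z])
lemma lin_Ttop_h: assumes Z: "lin sM sM Z" shows "lin s1 sH f \<Longrightarrow> lin s1 sM (\<lambda>x. Tt_op \<Delta> S act Z (f x) y)"
  unfolding Tt_op_def by (rule lin_comp[of sH]) (intro lin_intros lin_app[OF Z])+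

lemma c_lem:
  assumes X: "lin sM sM X"
  shows "swsum (\<lambda>a b. act (S a) (T_op \<Delta> S act X b m)) (\<Delta> h) = X (act (S h) m)"
proof -
  have "swsum (\<lambda>a b. act (S a) (T_op \<Delta> S act X b m)) (\<Delta> h) =
     swsum (\<lambda>a b. swsum (\<lambda>c d. act (S a) (act c (X (act (S d) m)))) (\<Delta> b)) (\<Delta> h)"
    by (simp add: T_op_def lin_swsum[OF lin_act2])
  also have "\<dots> = swsum (\<lambda>a b. swsum (\<lambda>c d. act (S c) (act d (X (act (S b) m)))) (\<Delta> a)) (\<Delta> h)"
    by (rule coassocV[OF vsM, symmetric]) (intro lin_intros lin_app[OF X])+
  also have "\<dots> = swsum (\<lambda>a b. act (swsum (\<lambda>c d. S c * d) (\<Delta> a)) (X (act (S b) m))) (\<Delta> h)"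
    by (simp add: lin_swsum[OF lin_act1] act_mult)
  also have "\<dots> = swsum (\<lambda>a b. sM (\<epsilon> a) (X (act (S b) m))) (\<Delta> h)"
    by (simp add: antip1 lin_scale[OF lin_act1] act_one)
  also have "\<dots> = X (act (S h) m)"
    apply (subst (2) counit1[symmetric, of h])
    by (simp add: lin_swsum[OF linS] lin_swsum[OF lin_act1] lin_swsum[OF X] lin_scale[OF linS]
        lin_scale[OF lin_act1] lin_scale[OF X])
  finally show ?thesis .
qed

lemma a_lem:
  assumes X: "lin sM sM X"
  shows "swsum (\<lambda>a b. act a (Tt_op \<Delta> S act X b m)) (\<Delta> h) = X (act h m)"
proof -
  have "swsum (\<lambda>a b. act a (Tt_op \<Delta> S act X b m)) (\<Delta> h) =
     swsum (\<lambda>a b. swsum (\<lambda>c d. act a (act (S c) (X (act d m)))) (\<Delta> b)) (\<Delta> h)"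
    by (simp add: Tt_op_def lin_swsum[OF lin_act2])
  also have "\<dots> = swsum (\<lambda>a b. swsum (\<lambda>c d. act c (act (S d) (X (act b m)))) (\<Delta> a)) (\<Delta> h)"
    by (rule coassocV[OF vsM, symmetric]) (intro lin_intros lin_app[OF X])+
  also have "\<dots> = swsum (\<lambda>a b. act (swsum (\<lambda>c d. c * S d) (\<Delta> a)) (X (act b m))) (\<Delta> h)"
    by (simp add: lin_swsum[OF lin_act1] act_mult)
  also have "\<dots> = swsum (\<lambda>a b. sM (\<epsilon> a) (X (act b m))) (\<Delta> h)"
    by (simp add: antip2 lin_scale[OF lin_act1] act_one)
  also have "\<dots> = X (act h m)"
    apply (subst (2) counit1[symmetric, of h])
    by (simp add: lin_swsum[OF lin_act1] lin_swsum[OF X]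
        lin_scale[OF lin_act1] lin_scale[OF X])
  finally show ?thesis .
qed

lemma d_lem:
  assumes X: "lin sM sM X"
  shows "swsum (\<lambda>a b. Tt_op \<Delta> S act X a (act (S b) m)) (\<Delta> h) = act (S h) (X m)"
proof -
  have L: "lin sH sM (\<lambda>u. act a (X (act u m)))" for a
    by (intro lin_intros lin_app[OF X])
  have "swsum (\<lambda>a b. Tt_op \<Delta> S act X a (act (S b) m)) (\<Delta> h) =
     swsum (\<lambda>a b. swsum (\<lambda>c d. act (S c) (X (act d (act (S b) m)))) (\<Delta> a)) (\<Delta> h)"
    by (simp add: Tt_op_def)
  also have "\<dots> = swsum (\<lambda>a b. swsum (\<lambda>c d. act (S a) (X (act c (act (S d) m)))) (\<Delta> b)) (\<Delta> h)"
    by (rule coassocV[OF vsM]) (intro lin_intros lin_app[OF X])+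
  also have "\<dots> = swsum (\<lambda>a b. act (S a) (X (act (swsum (\<lambda>c d. c * S d) (\<Delta> b)) m))) (\<Delta> h)"
    by (simp add: lin_swsum[OF L] act_mult)
  also have "\<dots> = swsum (\<lambda>a b. sM (\<epsilon> b) (act (S a) (X m))) (\<Delta> h)"
    by (simp add: antip2 lin_scale[OF lin_act1] lin_scale[OF lin_act2] lin_scale[OF X] act_one)
  also have "\<dots> = act (S h) (X m)"
    apply (subst (2) counit2[symmetric, of h])
    by (simp add: lin_swsum[OF linS] lin_swsum[OF lin_act1] lin_scale[OF linS] lin_scale[OF lin_act1])
  finally show ?thesis .
qed

lemma G_lem:
  assumes Z: "lin sM sM Z" and T: "lin sM sM T"
    and comm: "\<And>d y. T_op \<Delta> S act Z d (T y) = T (T_op \<Delta> S act Z d y)"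
  shows "Z (Tt_op \<Delta> S act T k m) = Tt_op \<Delta> S act T k (Z m)"
proof -
  have "Z (Tt_op \<Delta> S act T k m) = swsum (\<lambda>a b. Z (act (S a) (T (act b m)))) (\<Delta> k)"
    by (simp add: Tt_op_def lin_swsum[OF Z])
  also have "\<dots> = swsum (\<lambda>a b. swsum (\<lambda>c d. act (S c) (T_op \<Delta> S act Z d (T (act b m)))) (\<Delta> a)) (\<Delta> k)"
    by (simp only: c_lem[OF Z])
  also have "\<dots> = swsum (\<lambda>a b. swsum (\<lambda>c d. act (S c) (T (T_op \<Delta> S act Z d (act b m)))) (\<Delta> a)) (\<Delta> k)"
    by (simp only: comm)
  also have "\<dots> = swsum (\<lambda>a b. swsum (\<lambda>c d. act (S a) (T (T_op \<Delta> S act Z c (act d m)))) (\<Delta> b)) (\<Delta> k)"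
    by (rule coassocV[OF vsM]) (intro lin_intros lin_app[OF T] lin_Top_m[OF Z] lin_Top_h[OF Z])+
  also have "\<dots> = swsum (\<lambda>a b. act (S a) (T (swsum (\<lambda>c d. T_op \<Delta> S act Z c (act d m)) (\<Delta> b)))) (\<Delta> k)"
    by (simp add: lin_swsum[OF lin_act2] lin_swsum[OF T])
  also have "\<dots> = Tt_op \<Delta> S act T k (Z m)"
    by (simp add: b_lem[OF Z] Tt_op_def)
  finally show ?thesis .
qed

lemma G'_lem:
  assumes Z: "lin sM sM Z" and T: "lin sM sM T"
    and comm: "\<And>d y. Tt_op \<Delta> S act Z d (T y) = T (Tt_op \<Delta> S act Z d y)"
  shows "Z (T_op \<Delta> S act T h m) = T_op \<Delta> S act T h (Z m)"
proof -
  have "Z (T_op \<Delta> S act T h m) = swsum (\<lambda>a b. Z (act a (T (act (S b) m)))) (\<Delta> h)"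
    by (simp add: T_op_def lin_swsum[OF Z])
  also have "\<dots> = swsum (\<lambda>a b. swsum (\<lambda>c d. act c (Tt_op \<Delta> S act Z d (T (act (S b) m)))) (\<Delta> a)) (\<Delta> h)"
    by (simp only: a_lem[OF Z])
  also have "\<dots> = swsum (\<lambda>a b. swsum (\<lambda>c d. act c (T (Tt_op \<Delta> S act Z d (act (S b) m)))) (\<Delta> a)) (\<Delta> h)"
    by (simp only: comm)
  also have "\<dots> = swsum (\<lambda>a b. swsum (\<lambda>c d. act a (T (Tt_op \<Delta> S act Z c (act (S d) m)))) (\<Delta> b)) (\<Delta> h)"
    by (rule coassocV[OF vsM]) (intro lin_intros lin_app[OF T] lin_Ttop_m[OF Z] lin_Ttop_h[OF Z])+
  also have "\<dots> = swsum (\<lambda>a b. act a (T (swsum (\<lambda>c d. Tt_op \<Delta> S act Z c (act (S d) m)) (\<Delta> b)))) (\<Delta> h)"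
    by (simp add: lin_swsum[OF lin_act2] lin_swsum[OF T])
  also have "\<dots> = T_op \<Delta> S act T h (Z m)"
    by (simp add: d_lem[OF Z] T_op_def)
  finally show ?thesis .
qed


lemma H2: assumes vs: "vector_space sV" and g: "lin sH sV g"
  shows "swsum (\<lambda>a b. sV (\<epsilon> b) (g a)) (\<Delta> y) = g y"
proof -
  have "g y = g (swsum (\<lambda>a b. sH (\<epsilon> b) a) (\<Delta> y))" by (simp add: counit2)
  also have "\<dots> = swsum (\<lambda>a b. sV (\<epsilon> b) (g a)) (\<Delta> y)"
    by (simp add: lin_swsum[OF g] lin_scale[OF g])
  finally show ?thesis by simp
qed

lemma H2': assumes vs: "vector_space sV" and g: "lin sH sV g"
  shows "swsum (\<lambda>a b. sV (\<epsilon> a) (g b)) (\<Delta> y) = g y"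
proof -
  have "g y = g (swsum (\<lambda>a b. sH (\<epsilon> a) b) (\<Delta> y))" by (simp add: counit1)
  also have "\<dots> = swsum (\<lambda>a b. sV (\<epsilon> a) (g b)) (\<Delta> y)"
    by (simp add: lin_swsum[OF g] lin_scale[OF g])
  finally show ?thesis by simp
qed

lemma H1: "swsum (\<lambda>d f. A * (b * (d * (S f * B)))) (\<Delta> z) = sH (\<epsilon> z) (A * (b * B))"
proof -
  have g: "lin sH sH (\<lambda>u. A * (b * (u * B)))" by (intro lin_intros)
  have "swsum (\<lambda>d f. A * (b * (d * (S f * B)))) (\<Delta> z) = A * (b * (swsum (\<lambda>d f. d * S f) (\<Delta> z) * B))"
    by (simp add: lin_swsum[OF g] mult.assoc)
  also have "\<dots> = sH (\<epsilon> z) (A * (b * B))"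
    using lin_scale[OF g, of "\<epsilon> z" 1] by (simp add: antip2)
  finally show ?thesis .
qed

lemma H3: "swsum (\<lambda>b e. A * (b * S e)) (\<Delta> z) = sH (\<epsilon> z) A"
proof -
  have g: "lin sH sH (\<lambda>u. A * u)" by (intro lin_intros)
  have "swsum (\<lambda>b e. A * (b * S e)) (\<Delta> z) = A * swsum (\<lambda>b e. b * S e) (\<Delta> z)"
    by (simp add: lin_swsum[OF g])
  also have "\<dots> = sH (\<epsilon> z) A"
    using lin_scale[OF g, of "\<epsilon> z" 1] by (simp add: antip2)
  finally show ?thesis .
qed

lemma H4: "swsum (\<lambda>u v. S u * (v * B)) (\<Delta> z) = sH (\<epsilon> z) B"
proof -
  have g: "lin sH sH (\<lambda>u. u * B)" by (intro lin_intros)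
  have "swsum (\<lambda>u v. S u * (v * B)) (\<Delta> z) = swsum (\<lambda>u v. S u * v) (\<Delta> z) * B"
    by (simp add: lin_swsum[OF g] mult.assoc)
  also have "\<dots> = sH (\<epsilon> z) B"
    using lin_scale[OF g, of "\<epsilon> z" 1] by (simp add: antip1)
  finally show ?thesis .
qed

lemma S_anti: "S (x * y) = S y * S x"
proof -
  define E where "E = swsum (\<lambda>x1 x2. swsum (\<lambda>y1 y2. swsum (\<lambda>b e. swsum (\<lambda>d f.
     S (x1 * y1) * (b * (d * (S f * S e)))) (\<Delta> y2)) (\<Delta> x2)) (\<Delta> y)) (\<Delta> x)"
  have "E = swsum (\<lambda>x1 x2. swsum (\<lambda>y1 y2. swsum (\<lambda>b e.
     sH (\<epsilon> y2) (S (x1 * y1) * (b * S e))) (\<Delta> x2)) (\<Delta> y)) (\<Delta> x)"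
    unfolding E_def by (simp only: H1)
  also have "\<dots> = swsum (\<lambda>x1 x2. swsum (\<lambda>b e. swsum (\<lambda>y1 y2.
     sH (\<epsilon> y2) (S (x1 * y1) * (b * S e))) (\<Delta> y)) (\<Delta> x2)) (\<Delta> x)"
    by (rule refl | rule swsum_swap | rule swsum_cong2)+
  also have "\<dots> = swsum (\<lambda>x1 x2. swsum (\<lambda>b e. S (x1 * y) * (b * S e)) (\<Delta> x2)) (\<Delta> x)"
  proof -
    have "swsum (\<lambda>y1 y2. sH (\<epsilon> y2) (S (x1 * y1) * (b * S e))) (\<Delta> y) = S (x1 * y) * (b * S e)" for x1 b e
      by (rule H2[OF vsH, of "\<lambda>u. S (x1 * u) * (b * S e)"]) (intro lin_intros)
    then show ?thesis by simp
  qed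
  also have "\<dots> = swsum (\<lambda>x1 x2. sH (\<epsilon> x2) (S (x1 * y))) (\<Delta> x)"
    by (simp only: H3)
  also have "\<dots> = S (x * y)"
    by (rule H2[OF vsH, of "\<lambda>u. S (u * y)"]) (intro lin_intros)
  finally have E1: "E = S (x * y)" .
  have "E = swsum (\<lambda>x1 x2. swsum (\<lambda>b e. swsum (\<lambda>y1 y2. swsum (\<lambda>d f.
     S (x1 * y1) * (b * (d * (S f * S e)))) (\<Delta> y2)) (\<Delta> y)) (\<Delta> x2)) (\<Delta> x)"
    unfolding E_def by (rule refl | rule swsum_swap | rule swsum_cong2)+
  also have "\<dots> = swsum (\<lambda>a e. swsum (\<lambda>x1 b. swsum (\<lambda>y1 y2. swsum (\<lambda>d f.
     S (x1 * y1) * (b * (d * (S f * S e)))) (\<Delta> y2)) (\<Delta> y)) (\<Delta> a)) (\<Delta> x)"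
    by (rule coassocV[OF vsH, symmetric]) (intro lin_intros)+
  also have "\<dots> = swsum (\<lambda>a e. swsum (\<lambda>y1 y2. swsum (\<lambda>d f. swsum (\<lambda>x1 b. 
     S (x1 * y1) * (b * (d * (S f * S e)))) (\<Delta> a)) (\<Delta> y2)) (\<Delta> y)) (\<Delta> x)"
    by (rule swsum_cong2, rule trans[OF swsum_swap], rule swsum_cong2, rule swsum_swap)
  also have "\<dots> = swsum (\<lambda>a e. swsum (\<lambda>c f. swsum (\<lambda>y1 d. swsum (\<lambda>x1 b. 
     S (x1 * y1) * (b * (d * (S f * S e)))) (\<Delta> a)) (\<Delta> c)) (\<Delta> y)) (\<Delta> x)"
  proof -
    have "swsum (\<lambda>y1 y2. swsum (\<lambda>d f. swsum (\<lambda>x1 b. 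
     S (x1 * y1) * (b * (d * (S f * S e)))) (\<Delta> a)) (\<Delta> y2)) (\<Delta> y) =
      swsum (\<lambda>c f. swsum (\<lambda>y1 d. swsum (\<lambda>x1 b. 
     S (x1 * y1) * (b * (d * (S f * S e)))) (\<Delta> a)) (\<Delta> c)) (\<Delta> y)" for a e
      by (rule coassocV[OF vsH, symmetric]) (intro lin_intros)+
    then show ?thesis by simp
  qed
  also have "\<dots> = swsum (\<lambda>a e. swsum (\<lambda>c f. sH (\<epsilon> (a * c)) (S f * S e)) (\<Delta> y)) (\<Delta> x)"
  proof -
    have "swsum (\<lambda>y1 d. swsum (\<lambda>x1 b. S (x1 * y1) * (b * (d * (S f * S e)))) (\<Delta> a)) (\<Delta> c)
        = sH (\<epsilon> (a * c)) (S f * S e)" for a c e f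
    proof -
      have "swsum (\<lambda>u v. S u * (v * (S f * S e))) (\<Delta> (a * c)) =
        swsum (\<lambda>x1 b. swsum (\<lambda>y1 d. S (x1 * y1) * ((b * d) * (S f * S e))) (\<Delta> c)) (\<Delta> a)"
        by (rule multV[OF vsH, where F = "\<lambda>u v. S u * (v * (S f * S e))"]) (intro lin_intros)+
      moreover have "swsum (\<lambda>y1 d. swsum (\<lambda>x1 b. S (x1 * y1) * (b * (d * (S f * S e)))) (\<Delta> a)) (\<Delta> c)
         = swsum (\<lambda>x1 b. swsum (\<lambda>y1 d. S (x1 * y1) * (b * (d * (S f * S e)))) (\<Delta> c)) (\<Delta> a)"
        by (rule swsum_swap)
      ultimately show ?thesis using H4[of "S f * S e" "a * c"] by (simp add: mult.assoc)
    qed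
    then show ?thesis by simp
  qed
  also have "\<dots> = swsum (\<lambda>a e. sH (\<epsilon> a) (swsum (\<lambda>c f. sH (\<epsilon> c) (S f * S e)) (\<Delta> y))) (\<Delta> x)"
    using vsH by (simp add: eps_mult vs_assoc lin_swsum[OF lin_sH[OF lin_id]])
  also have "\<dots> = swsum (\<lambda>a e. sH (\<epsilon> a) (S y * S e)) (\<Delta> x)"
  proof -
    have "swsum (\<lambda>c f. sH (\<epsilon> c) (S f * S e)) (\<Delta> y) = S y * S e" for e
      by (rule H2'[OF vsH, of "\<lambda>u. S u * S e"]) (intro lin_intros)
    then show ?thesis by simp
  qed
  also have "\<dots> = S y * S x"
    by (rule H2'[OF vsH, of "\<lambda>u. S y * S u"]) (intro lin_intros)
  finally show ?thesis using E1 by simp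
qed


lemma S_one: "S 1 = 1"
proof -
  have "swsum (\<lambda>a b. S a * b) (\<Delta> 1) = S 1 * 1"
    by (rule unitV[OF vsH]) (intro lin_intros)+
  moreover have "sH 1 1 = 1" using vsH by (simp add: vector_space.vector_space_assms(4))
  ultimately show ?thesis using antip1[of 1] by (simp add: eps_one)
qed

lemma Top_one: assumes X: "lin sM sM X" shows "T_op \<Delta> S act X 1 m = X m"
proof -
  have "swsum (\<lambda>a b. act a (X (act (S b) m))) (\<Delta> 1) = act 1 (X (act (S 1) m))"
    by (rule unitV[OF vsM]) (intro lin_intros lin_app[OF X])+
  then show ?thesis by (simp add: T_op_def S_one act_one)
qed

lemma Ttop_one: assumes X: "lin sM sM X" shows "Tt_op \<Delta> S act X 1 m = X m"
proof -
  have "swsum (\<lambda>a b. act (S a) (X (act b m))) (\<Delta> 1) = act (S 1) (X (act 1 m))"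
    by (rule unitV[OF vsM]) (intro lin_intros lin_app[OF X])+
  then show ?thesis by (simp add: Tt_op_def S_one act_one)
qed

lemma Top_mult: assumes X: "lin sM sM X"
  shows "T_op \<Delta> S act X (g * h) m = T_op \<Delta> S act (T_op \<Delta> S act X h) g m"
proof -
  have "swsum (\<lambda>a b. act a (X (act (S b) m))) (\<Delta> (g * h)) =
    swsum (\<lambda>a b. swsum (\<lambda>c d. act (a * c) (X (act (S (b * d)) m))) (\<Delta> h)) (\<Delta> g)"
    by (rule multV[OF vsM, where F = "\<lambda>a b. act a (X (act (S b) m))"]) (intro lin_intros lin_app[OF X])+
  then show ?thesis by (simp add: T_op_def S_anti act_mult lin_swsum[OF lin_act2])
qed

theorem main_loc:
  assumes T: "lin sM sM T"
  shows "((\<forall>h. T_op \<Delta> S act T h \<circ> T = T \<circ> T_op \<Delta> S act T h)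
          \<longleftrightarrow> (\<forall>h. Tt_op \<Delta> S act T h \<circ> T = T \<circ> Tt_op \<Delta> S act T h))
       \<and> ((\<forall>h. Tt_op \<Delta> S act T h \<circ> T = T \<circ> Tt_op \<Delta> S act T h)
          \<longleftrightarrow> (\<forall>h k. T_op \<Delta> S act T h \<circ> Tt_op \<Delta> S act T k = Tt_op \<Delta> S act T k \<circ> T_op \<Delta> S act T h))"
proof -
  let ?P = "T_op \<Delta> S act" and ?Q = "Tt_op \<Delta> S act"
  have c1: "(\<forall>h. ?P T h \<circ> T = T \<circ> ?P T h) \<longleftrightarrow> (\<forall>h m. ?P T h (T m) = T (?P T h m))"
    by (simp add: fun_eq_iff)
  have c2: "(\<forall>h. ?Q T h \<circ> T = T \<circ> ?Q T h) \<longleftrightarrow> (\<forall>h m. ?Q T h (T m) = T (?Q T h m))"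
    by (simp add: fun_eq_iff)
  have c3: "(\<forall>h k. ?P T h \<circ> ?Q T k = ?Q T k \<circ> ?P T h) \<longleftrightarrow> (\<forall>h k m. ?P T h (?Q T k m) = ?Q T k (?P T h m))"
    by (simp add: fun_eq_iff)
  have linP: "lin sM sM (?P T h)" for h
    using lin_Top_m[OF T lin_id, where d=h] by simp
  have i_ii: "\<forall>h m. ?Q T h (T m) = T (?Q T h m)" if i: "\<forall>h m. ?P T h (T m) = T (?P T h m)"
    using G_lem[OF T T] i by metis
  have ii_i: "\<forall>h m. ?P T h (T m) = T (?P T h m)" if ii: "\<forall>h m. ?Q T h (T m) = T (?Q T h m)"
    using G'_lem[OF T T] ii by metis
  have i_iii: "\<forall>h k m. ?P T h (?Q T k m) = ?Q T k (?P T h m)" if i: "\<forall>h m. ?P T h (T m) = T (?P T h m)"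
  proof (intro allI)
    fix h k m
    have "?P (?P T h) d (T y) = T (?P (?P T h) d y)" for d y
      using i by (simp add: Top_mult[OF T, symmetric])
    then show "?P T h (?Q T k m) = ?Q T k (?P T h m)"
      using G_lem[OF linP T] by metis
  qed
  have iii_ii: "\<forall>h m. ?Q T h (T m) = T (?Q T h m)" if iii: "\<forall>h k m. ?P T h (?Q T k m) = ?Q T k (?P T h m)"
  proof (intro allI)
    fix h m
    show "?Q T h (T m) = T (?Q T h m)" using iii[rule_format, of 1 h m] by (simp add: Top_one[OF T])
  qed
  show ?thesis unfolding c1 c2 c3 using i_ii ii_i i_iii iii_ii by blast
qed

end

theorem mainTheorem5:
  fixes sH :: "'k::field \<Rightarrow> 'h::ring_1 \<Rightarrow> 'h"
    and \<Delta> :: "'h \<Rightarrow> ('h \<times> 'h) list" and \<epsilon> :: "'h \<Rightarrow> 'k" and S :: "'h \<Rightarrow> 'h"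
    and sM :: "'k \<Rightarrow> 'm::ab_group_add \<Rightarrow> 'm" and act :: "'h \<Rightarrow> 'm \<Rightarrow> 'm"
    and T :: "'m \<Rightarrow> 'm"
  assumes "hopf_algebra sH \<Delta> \<epsilon> S"
    and "bij S"
    and "left_hmodule sH sM act"
    and "Vector_Spaces.linear sM sM T"
    and "T \<circ> T = T"
  shows "((\<forall>h. T_op \<Delta> S act T h \<circ> T = T \<circ> T_op \<Delta> S act T h)
          \<longleftrightarrow> (\<forall>h. Tt_op \<Delta> S act T h \<circ> T = T \<circ> Tt_op \<Delta> S act T h))
       \<and> ((\<forall>h. Tt_op \<Delta> S act T h \<circ> T = T \<circ> Tt_op \<Delta> S act T h)
          \<longleftrightarrow> (\<forall>h k. T_op \<Delta> S act T h \<circ> Tt_op \<Delta> S act T k = Tt_op \<Delta> S act T k \<circ> T_op \<Delta> S act T h))"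
proof -
  interpret hctx sH \<Delta> \<epsilon> S sM act using assms(1,3) by (rule hctx.intro)
  have "lin sM sM T" using assms(4) by (simp add: linear_lin)
  then show ?thesis by (rule main_loc)
qed

end
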